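(* Let $M,K\in\mathbb R^{n\times n}$ be symmetric positive definite, $\nu>0$, $\omega\ge0$, and \[ \mathcal M=\begin{bmatrix}M&\sqrt\nu(K-i\omega M)\\\sqrt\nu(K+i\omega M)&-M\end{bmatrix}\in\mathbb C^{2n\times2n}. \] (1) For $\mathcal P=\mathrm{diag}(P,P)$ with any real symmetric positive definite $P\in\mathbb R^{n\times n}$, the spectrum of $\mathcal P^{-1}\mathcal M$ is real and symmetric with respect to zero. (2) For $P=M+\sqrt\nu(K+\omega M)$ and $\mathcal P=\mathrm{diag}(P,P)$, the inf-sup constant $\gamma=\inf_{0\ne x}\sup_{0\ne w}\frac{|\langle\mathcal Mx,w\rangle|}{\|x\|_{\mathcal P}\|w\|_{\mathcal P}}$ and the norm $\|\mathcal B\|=\sup_{0\ne x}\sup_{0\ne w}\frac{|\langle\mathcal Mx,w\rangle|}{\|x\|_{\mathcal P}\|w\|_{\mathcal P}}$ satisfy \[ \gamma\ge\frac1{\sqrt3},\qquad\|\mathcal B\|\le1. \] Consequently every eigenvalue of $\mathcal P^{-1}\mathcal M$ lies in $[-1,-1/\sqrt3]\cup[1/\sqrt3,1]$.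
   Context: $\langle z,w\rangle=w^*z$ on $\mathbb C^{2n}$ and $\|x\|_{\mathcal P}=\langle\mathcal Px,x\rangle^{1/2}$; $x,w$ range over $\mathbb C^{2n}$. *)

theory Defs
  imports "Jordan_Normal_Form.Char_Poly" "Jordan_Normal_Form.Gauss_Jordan_Elimination"
begin

definition spd_real :: "nat \<Rightarrow> real mat \<Rightarrow> bool" where
  "spd_real n A \<longleftrightarrow> A \<in> carrier_mat n n \<and> transpose_mat A = A \<and>
     (\<forall>x \<in> carrier_vec n. x \<noteq> 0\<^sub>v n \<longrightarrow> x \<bullet> (A *\<^sub>v x) > 0)"

definition cmat :: "real mat \<Rightarrow> complex mat" where
  "cmat A = map_mat complex_of_real A"

definition calM :: "nat \<Rightarrow> real \<Rightarrow> real \<Rightarrow> real mat \<Rightarrow> real mat \<Rightarrow> complex mat" where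
  "calM n \<nu> \<omega> M K = four_block_mat
      (cmat M)
      (complex_of_real (sqrt \<nu>) \<cdot>\<^sub>m (cmat K - (\<i> * complex_of_real \<omega>) \<cdot>\<^sub>m cmat M))
      (complex_of_real (sqrt \<nu>) \<cdot>\<^sub>m (cmat K + (\<i> * complex_of_real \<omega>) \<cdot>\<^sub>m cmat M))
      (- cmat M)"

definition calP :: "nat \<Rightarrow> real mat \<Rightarrow> complex mat" where
  "calP n P = four_block_mat (cmat P) (0\<^sub>m n n) (0\<^sub>m n n) (cmat P)"

definition minv :: "complex mat \<Rightarrow> complex mat" where
  "minv A = the (mat_inverse A)"

definition cinner :: "complex vec \<Rightarrow> complex vec \<Rightarrow> complex" where
  "cinner z w = z \<bullet>c w"

definition pnorm :: "complex mat \<Rightarrow> complex vec \<Rightarrow> real" where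
  "pnorm Pm x = sqrt (Re (cinner (Pm *\<^sub>v x) x))"

definition ratio :: "complex mat \<Rightarrow> complex mat \<Rightarrow> complex vec \<Rightarrow> complex vec \<Rightarrow> real" where
  "ratio A Pm x w = cmod (cinner (A *\<^sub>v x) w) / (pnorm Pm x * pnorm Pm w)"

definition nzvecs :: "nat \<Rightarrow> complex vec set" where
  "nzvecs m = {x \<in> carrier_vec m. x \<noteq> 0\<^sub>v m}"

definition infsup_const :: "nat \<Rightarrow> complex mat \<Rightarrow> complex mat \<Rightarrow> real" where
  "infsup_const m A Pm = (INF x \<in> nzvecs m. SUP w \<in> nzvecs m. ratio A Pm x w)"

definition bnorm :: "nat \<Rightarrow> complex mat \<Rightarrow> complex mat \<Rightarrow> real" where
  "bnorm m A Pm = (SUP x \<in> nzvecs m. SUP w \<in> nzvecs m. ratio A Pm x w)"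

end

theory Submission
  imports Defs
begin


definition sf :: "nat \<Rightarrow> complex mat \<Rightarrow> (nat \<Rightarrow> complex) \<Rightarrow> (nat \<Rightarrow> complex) \<Rightarrow> complex" where
  "sf n A x y = (\<Sum>i<n. \<Sum>j<n. cnj (y i) * A $$ (i,j) * x j)"

lemma sf_cong:
  assumes "\<And>i. i < n \<Longrightarrow> x i = x' i" "\<And>i. i < n \<Longrightarrow> y i = y' i"
  shows "sf n A x y = sf n A x' y'"
  unfolding sf_def using assms by (intro sum.cong refl) auto

lemma sf_mat:
  assumes "\<And>i j. i < n \<Longrightarrow> j < n \<Longrightarrow> Q $$ (i,j) = a * A $$ (i,j) + b * B $$ (i,j)"
  shows "sf n Q x y = a * sf n A x y + b * sf n B x y"
  unfolding sf_def sum_distrib_left sum.distrib[symmetric]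
  using assms by (intro sum.cong refl) (auto simp: algebra_simps)

lemma sf_lin1:
  "sf n A (\<lambda>i. a * x i + b * y i) z = a * sf n A x z + b * sf n A y z"
  unfolding sf_def sum_distrib_left sum.distrib[symmetric]
  by (intro sum.cong refl) (auto simp: algebra_simps)

lemma sf_lin2:
  "sf n A z (\<lambda>i. a * x i + b * y i) = cnj a * sf n A z x + cnj b * sf n A z y"
  unfolding sf_def sum_distrib_left sum.distrib[symmetric]
  by (intro sum.cong refl) (auto simp: algebra_simps)



definition symr :: "nat \<Rightarrow> real mat \<Rightarrow> bool" where
  "symr n A \<longleftrightarrow> A \<in> carrier_mat n n \<and> (\<forall>i<n. \<forall>j<n. A $$ (i,j) = A $$ (j,i))"

lemma spd_symr: "spd_real n A \<Longrightarrow> symr n A"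
  unfolding spd_real_def symr_def
  by (metis carrier_matD index_transpose_mat(1))

lemma cmat_idx: "A \<in> carrier_mat n n \<Longrightarrow> i < n \<Longrightarrow> j < n \<Longrightarrow> cmat A $$ (i,j) = complex_of_real (A $$ (i,j))"
  unfolding cmat_def by auto

lemma sf_herm:
  assumes "symr n A"
  shows "sf n (cmat A) x y = cnj (sf n (cmat A) y x)"
proof -
  have "sf n (cmat A) y x = (\<Sum>j<n. \<Sum>i<n. cnj (x j) * cmat A $$ (j,i) * y i)"
    unfolding sf_def ..
  also have "\<dots> = (\<Sum>i<n. \<Sum>j<n. cnj (x j) * cmat A $$ (j,i) * y i)"
    by (rule sum.swap)
  finally show ?thesis using assms unfolding sf_def symr_def
    by (auto simp: cmat_idx intro!: sum.cong)
qed

lemma sf_cnj: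
  assumes "A \<in> carrier_mat n n"
  shows "sf n (cmat A) (\<lambda>i. cnj (x i)) y = cnj (sf n (cmat A) x (\<lambda>i. cnj (y i)))"
  unfolding sf_def using assms by (auto simp: cmat_idx intro!: sum.cong)


lemma quad_real: assumes "A \<in> carrier_mat n n" "a \<in> carrier_vec n"
  shows "a \<bullet> (A *\<^sub>v a) = (\<Sum>i<n. \<Sum>j<n. a $ i * A $$ (i,j) * a $ j)"
proof -
  have "a \<bullet> (A *\<^sub>v a) = (\<Sum>i<n. a $ i * (\<Sum>j<n. A $$ (i,j) * a $ j))"
    unfolding scalar_prod_def using assms
    by (intro sum.cong) (auto simp: atLeast0LessThan scalar_prod_def)
  then show ?thesis by (simp add: sum_distrib_left mult.assoc)
qed

lemma spd_nonneg: "spd_real n A \<Longrightarrow> a \<in> carrier_vec n \<Longrightarrow> a \<bullet> (A *\<^sub>v a) \<ge> 0"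
  unfolding spd_real_def
  by (cases "a = 0\<^sub>v n") (auto simp: less_le)

lemma sf_re:
  assumes A: "A \<in> carrier_mat n n"
  shows "Re (sf n (cmat A) x x) = vec n (\<lambda>i. Re (x i)) \<bullet> (A *\<^sub>v vec n (\<lambda>i. Re (x i)))
     + vec n (\<lambda>i. Im (x i)) \<bullet> (A *\<^sub>v vec n (\<lambda>i. Im (x i)))"
proof -
  have "Re (sf n (cmat A) x x) = (\<Sum>i<n. \<Sum>j<n. Re (x i) * A $$ (i,j) * Re (x j) + Im (x i) * A $$ (i,j) * Im (x j))"
    unfolding sf_def Re_sum by (intro sum.cong refl) (simp add: cmat_idx[OF A] algebra_simps)
  also have "\<dots> = (\<Sum>i<n. \<Sum>j<n. Re (x i) * A $$ (i,j) * Re (x j)) + (\<Sum>i<n. \<Sum>j<n. Im (x i) * A $$ (i,j) * Im (x j))"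
    by (simp add: sum.distrib)
  finally show ?thesis
    unfolding quad_real[OF A vec_carrier] by simp
qed

lemma sf_im:
  assumes "symr n A" shows "sf n (cmat A) x x = complex_of_real (Re (sf n (cmat A) x x))"
  using sf_herm[OF assms, of x x] by (simp add: complex_eq_iff)

lemma sf_nonneg:
  assumes "spd_real n A" shows "Re (sf n (cmat A) x x) \<ge> 0"
  using assms spd_nonneg[OF assms] unfolding sf_re[OF spd_real_def[THEN iffD1, OF assms, THEN conjunct1]]
  by (intro add_nonneg_nonneg) auto

lemma sf_pos:
  assumes "spd_real n A" "i < n" "x i \<noteq> 0" shows "Re (sf n (cmat A) x x) > 0"
proof -
  have A: "A \<in> carrier_mat n n" using assms unfolding spd_real_def by auto
  let ?a = "vec n (\<lambda>i. Re (x i))" and ?b = "vec n (\<lambda>i. Im (x i))"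
  have "?a \<noteq> 0\<^sub>v n \<or> ?b \<noteq> 0\<^sub>v n"
  proof (rule ccontr)
    assume "\<not> ?thesis"
    then have "?a $ i = 0" "?b $ i = 0" using assms by auto
    then show False using assms by (auto simp: complex_eq_iff)
  qed
  then have "?a \<bullet> (A *\<^sub>v ?a) > 0 \<or> ?b \<bullet> (A *\<^sub>v ?b) > 0"
    using assms(1) unfolding spd_real_def by auto
  moreover have "?a \<bullet> (A *\<^sub>v ?a) \<ge> 0" "?b \<bullet> (A *\<^sub>v ?b) \<ge> 0"
    using spd_nonneg[OF assms(1)] by auto
  ultimately show ?thesis unfolding sf_re[OF A] by linarith
qed



lemma cs_aux:
  assumes "spd_real n A" "Re (sf n (cmat A) y y) > 0"
  shows "(cmod (sf n (cmat A) x y))^2 \<le> Re (sf n (cmat A) x x) * Re (sf n (cmat A) y y)"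
proof -
  have S: "symr n A" using spd_symr assms by auto
  let ?s = "sf n (cmat A)"
  define a where "a = Re (?s x x)"
  define b where "b = Re (?s y y)"
  define c where "c = ?s x y"
  have xx: "?s x x = of_real a" unfolding a_def by (rule sf_im[OF S])
  have yy: "?s y y = of_real b" unfolding b_def by (rule sf_im[OF S])
  have yx: "?s y x = cnj c" unfolding c_def by (rule sf_herm[OF S])
  define z where "z = (\<lambda>i. of_real b * x i + (- c) * y i)"
  have "?s z z = of_real b * (of_real b * ?s x x + cnj (- c) * ?s x y) + (- c) * (of_real b * ?s y x + cnj (-c) * ?s y y)"
    unfolding z_def sf_lin1 sf_lin2 by simp
  also have "\<dots> = of_real b * (of_real b * of_real a + cnj (- c) * c) + (- c) * (of_real b * cnj c + cnj (-c) * of_real b)"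
    unfolding xx yy yx c_def[symmetric] by simp
  also have "\<dots> = of_real (b * (a * b - ((Re c)^2 + (Im c)^2)))"
    by (simp add: complex_eq_iff power2_eq_square algebra_simps)
  also have "\<dots> = of_real (b * (a * b - (cmod c)^2))"
    by (simp only: cmod_power2)
  finally have "0 \<le> b * (a * b - (cmod c)^2)" using sf_nonneg[OF assms(1), of z] by simp
  then have "0 \<le> a * b - (cmod c)^2" using assms(2) unfolding b_def[symmetric] by (simp add: zero_le_mult_iff)
  then show ?thesis unfolding a_def b_def c_def by simp
qed



lemma cs:
  assumes "spd_real n A"
  shows "cmod (sf n (cmat A) x y) \<le> sqrt (Re (sf n (cmat A) x x)) * sqrt (Re (sf n (cmat A) y y))"
proof -
  have S: "symr n A" using spd_symr assms by auto
  let ?s = "sf n (cmat A)"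
  have sq: "(cmod (?s x y))^2 \<le> Re (?s x x) * Re (?s y y)"
  proof (cases "Re (?s y y) > 0")
    case True then show ?thesis using cs_aux[OF assms] by blast
  next
    case F1: False
    show ?thesis
    proof (cases "Re (?s x x) > 0")
      case True
      have "cmod (?s x y) = cmod (?s y x)" using sf_herm[OF S, of x y] by simp
      then show ?thesis using cs_aux[OF assms True, of y] by (simp add: mult.commute)
    next
      case False
      have a0: "Re (?s x x) = 0" "Re (?s y y) = 0" using F1 False sf_nonneg[OF assms] by (auto simp: le_less)
      define c where "c = ?s x y"
      have xx: "?s x x = 0" using sf_im[OF S, of x] a0 by simp
      have yy: "?s y y = 0" using sf_im[OF S, of y] a0 by simp
      have yx: "?s y x = cnj c" unfolding c_def by (rule sf_herm[OF S])
      define z where "z = (\<lambda>i. 1 * x i + (- c) * y i)"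
      have "?s z z = 1 * (1 * ?s x x + cnj (- c) * ?s x y) + (- c) * (1 * ?s y x + cnj (-c) * ?s y y)"
        unfolding z_def sf_lin1 sf_lin2 by simp
      also have "\<dots> = - 2 * of_real ((Re c)^2 + (Im c)^2)"
        unfolding xx yy yx c_def[symmetric] by (simp add: complex_eq_iff power2_eq_square algebra_simps)
      finally have "0 \<le> - 2 * ((Re c)^2 + (Im c)^2)" using sf_nonneg[OF assms, of z] by simp
      then have "(Re c)^2 + (Im c)^2 = 0" by (smt (verit) sum_power2_ge_zero)
      then have "c = 0" by (simp add: complex_eq_iff)
      then show ?thesis unfolding c_def using a0 by simp
    qed
  qed
  have "cmod (?s x y) \<le> sqrt (Re (?s x x) * Re (?s y y))"
    using sq by (simp add: real_le_rsqrt)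
  then show ?thesis by (simp add: real_sqrt_mult)
qed

lemma sum_split2: "(\<Sum>i<2*(n::nat). f i) = (\<Sum>i<n. f i) + (\<Sum>i<n. f (n+i))"
proof -
  have "(\<Sum>i<2*n. f i) = sum f {0..<n} + sum f {n..<2*n}"
    by (simp add: lessThan_atLeast0 sum.atLeastLessThan_concat)
  also have "sum f {n..<2*n} = sum f {0+n..<n+n}" by (simp add: mult_2)
  also have "\<dots> = (\<Sum>i<n. f (n+i))" using sum.atLeastLessThan_shift_bounds[of f 0 n n]
    by (simp add: lessThan_atLeast0 comp_def)
  finally show ?thesis by (simp add: lessThan_atLeast0)
qed

lemma block_cinner:
  assumes A: "A \<in> carrier_mat n n" and B: "B \<in> carrier_mat n n"
    and C: "C \<in> carrier_mat n n" and D: "D \<in> carrier_mat n n"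
    and x: "x \<in> carrier_vec (2*n)" and w: "w \<in> carrier_vec (2*n)"
  shows "cinner (four_block_mat A B C D *\<^sub>v x) w =
     sf n A (\<lambda>i. x$i) (\<lambda>i. w$i) + sf n B (\<lambda>i. x$(n+i)) (\<lambda>i. w$i)
   + sf n C (\<lambda>i. x$i) (\<lambda>i. w$(n+i)) + sf n D (\<lambda>i. x$(n+i)) (\<lambda>i. w$(n+i))"
proof -
  let ?F = "four_block_mat A B C D"
  have dF: "dim_row ?F = 2*n" "dim_col ?F = 2*n" using A D by (auto simp: mult_2)
  have dx: "dim_vec x = 2*n" and dw: "dim_vec w = 2*n" using x w by auto
  have Fv: "(?F *\<^sub>v x) $ i = (\<Sum>j<2*n. ?F $$ (i,j) * x $ j)" if "i < 2*n" for i
    using that dF dx by (simp add: scalar_prod_def lessThan_atLeast0)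
  have c1: "(?F *\<^sub>v x) $ i = (\<Sum>j<n. A $$ (i,j) * x $ j) + (\<Sum>j<n. B $$ (i,j) * x $ (n+j))" if "i < n" for i
    using Fv[of i] that A B C D by (simp add: sum_split2)
  have c2: "(?F *\<^sub>v x) $ (n+i) = (\<Sum>j<n. C $$ (i,j) * x $ j) + (\<Sum>j<n. D $$ (i,j) * x $ (n+j))" if "i < n" for i
    using Fv[of "n+i"] that A B C D by (simp add: sum_split2)
  have "cinner (?F *\<^sub>v x) w = (\<Sum>i<2*n. (?F *\<^sub>v x) $ i * cnj (w $ i))"
    unfolding cinner_def scalar_prod_def using dw by (simp add: lessThan_atLeast0)
  also have "\<dots> = (\<Sum>i<n. (?F *\<^sub>v x) $ i * cnj (w $ i)) + (\<Sum>i<n. (?F *\<^sub>v x) $ (n+i) * cnj (w $ (n+i)))"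
    by (rule sum_split2)
  also have "\<dots> = (\<Sum>i<n. ((\<Sum>j<n. A $$ (i,j) * x $ j) + (\<Sum>j<n. B $$ (i,j) * x $ (n+j))) * cnj (w $ i))
     + (\<Sum>i<n. ((\<Sum>j<n. C $$ (i,j) * x $ j) + (\<Sum>j<n. D $$ (i,j) * x $ (n+j))) * cnj (w $ (n+i)))"
    using c1 c2 by simp
  also have "\<dots> = sf n A (\<lambda>i. x$i) (\<lambda>i. w$i) + sf n B (\<lambda>i. x$(n+i)) (\<lambda>i. w$i)
   + sf n C (\<lambda>i. x$i) (\<lambda>i. w$(n+i)) + sf n D (\<lambda>i. x$(n+i)) (\<lambda>i. w$(n+i))"
    unfolding sf_def by (simp add: sum_distrib_left sum_distrib_right sum.distrib algebra_simps)
  finally show ?thesis .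
qed



lemma cmat_carrier[simp]: "A \<in> carrier_mat n n \<Longrightarrow> cmat A \<in> carrier_mat n n"
  unfolding cmat_def by auto

lemma calM_carrier: "M \<in> carrier_mat n n \<Longrightarrow> K \<in> carrier_mat n n \<Longrightarrow> calM n \<nu> \<omega> M K \<in> carrier_mat (2*n) (2*n)"
  unfolding calM_def mult_2 by (rule four_block_carrier_mat) auto

lemma calP_carrier: "P \<in> carrier_mat n n \<Longrightarrow> calP n P \<in> carrier_mat (2*n) (2*n)"
  unfolding calP_def mult_2 by (rule four_block_carrier_mat) auto

lemma E1:
  assumes M: "M \<in> carrier_mat n n" and K: "K \<in> carrier_mat n n"
    and x: "x \<in> carrier_vec (2*n)" and w: "w \<in> carrier_vec (2*n)"
  shows "cinner (calM n \<nu> \<omega> M K *\<^sub>v x) w =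
     sf n (cmat M) (\<lambda>i. x$i) (\<lambda>i. w$i)
   + (of_real (sqrt \<nu>) * sf n (cmat K) (\<lambda>i. x$(n+i)) (\<lambda>i. w$i) + (- of_real (sqrt \<nu>) * \<i> * of_real \<omega>) * sf n (cmat M) (\<lambda>i. x$(n+i)) (\<lambda>i. w$i))
   + (of_real (sqrt \<nu>) * sf n (cmat K) (\<lambda>i. x$i) (\<lambda>i. w$(n+i)) + (of_real (sqrt \<nu>) * \<i> * of_real \<omega>) * sf n (cmat M) (\<lambda>i. x$i) (\<lambda>i. w$(n+i)))
   - sf n (cmat M) (\<lambda>i. x$(n+i)) (\<lambda>i. w$(n+i))"
proof -
  let ?t = "complex_of_real (sqrt \<nu>)" and ?o = "\<i> * complex_of_real \<omega>"
  have cK: "cmat K \<in> carrier_mat n n" and cM: "cmat M \<in> carrier_mat n n" using M K by auto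
  have b2: "sf n (?t \<cdot>\<^sub>m (cmat K - ?o \<cdot>\<^sub>m cmat M)) y z = ?t * sf n (cmat K) y z + (- ?t * \<i> * of_real \<omega>) * sf n (cmat M) y z" for y z
    by (rule sf_mat) (use cK cM in \<open>auto simp: algebra_simps\<close>)
  have b3: "sf n (?t \<cdot>\<^sub>m (cmat K + ?o \<cdot>\<^sub>m cmat M)) y z = ?t * sf n (cmat K) y z + (?t * \<i> * of_real \<omega>) * sf n (cmat M) y z" for y z
    by (rule sf_mat) (use cK cM in \<open>auto simp: algebra_simps\<close>)
  have b4: "sf n (- cmat M) y z = (-1) * sf n (cmat M) y z + 0 * sf n (cmat M) y z" for y z
    by (rule sf_mat) (use cK cM in \<open>auto simp: algebra_simps\<close>)
  show ?thesis unfolding calM_def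
    by (subst block_cinner[OF cM _ _ _ x w]) (use cK cM in \<open>auto simp: b2 b3 b4\<close>)
qed

lemma E2:
  assumes P: "P \<in> carrier_mat n n"
    and x: "x \<in> carrier_vec (2*n)" and w: "w \<in> carrier_vec (2*n)"
  shows "cinner (calP n P *\<^sub>v x) w =
     sf n (cmat P) (\<lambda>i. x$i) (\<lambda>i. w$i) + sf n (cmat P) (\<lambda>i. x$(n+i)) (\<lambda>i. w$(n+i))"
proof -
  have cP: "cmat P \<in> carrier_mat n n" using P by auto
  have b: "sf n (0\<^sub>m n n) y z = 0 * sf n (cmat P) y z + 0 * sf n (cmat P) y z" for y z
    by (rule sf_mat) auto
  show ?thesis unfolding calP_def
    by (subst block_cinner[OF cP _ _ cP x w]) (auto simp: b)
qed



lemma P_idx: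
  assumes M: "M \<in> carrier_mat n n" and K: "K \<in> carrier_mat n n" and "i < n" "j < n"
  shows "(M + t \<cdot>\<^sub>m (K + \<omega> \<cdot>\<^sub>m M)) $$ (i,j) = M $$ (i,j) + t * (K $$ (i,j) + \<omega> * M $$ (i,j))"
  using assms by auto

lemma P_spd:
  assumes M: "spd_real n M" and K: "spd_real n K" and t: "t > 0" and w: "\<omega> \<ge> 0"
  shows "spd_real n (M + t \<cdot>\<^sub>m (K + \<omega> \<cdot>\<^sub>m M))"
proof -
  let ?P = "M + t \<cdot>\<^sub>m (K + \<omega> \<cdot>\<^sub>m M)"
  have Mc: "M \<in> carrier_mat n n" and Kc: "K \<in> carrier_mat n n" using M K unfolding spd_real_def by auto
  have SM: "symr n M" and SK: "symr n K" using M K spd_symr by auto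
  have Pc: "?P \<in> carrier_mat n n" using Mc Kc by auto
  have "transpose_mat ?P = ?P"
    by (rule eq_matI) (use Pc Mc Kc SM SK in \<open>auto simp: symr_def\<close>)
  moreover have "x \<bullet> (?P *\<^sub>v x) > 0" if x: "x \<in> carrier_vec n" "x \<noteq> 0\<^sub>v n" for x
  proof -
    have "x \<bullet> (?P *\<^sub>v x) = x \<bullet> (M *\<^sub>v x) + t * (x \<bullet> (K *\<^sub>v x) + \<omega> * (x \<bullet> (M *\<^sub>v x)))"
      unfolding quad_real[OF Pc x(1)] quad_real[OF Mc x(1)] quad_real[OF Kc x(1)]
      by (simp add: P_idx[OF Mc Kc] sum.distrib sum_distrib_left algebra_simps)
    moreover have "x \<bullet> (M *\<^sub>v x) > 0" "x \<bullet> (K *\<^sub>v x) > 0" using M K x unfolding spd_real_def by auto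
    ultimately show ?thesis using t w by (simp add: add_pos_nonneg)
  qed
  ultimately show ?thesis using Pc unfolding spd_real_def by auto
qed

lemma sfP:
  assumes M: "M \<in> carrier_mat n n" and K: "K \<in> carrier_mat n n"
  shows "sf n (cmat (M + t \<cdot>\<^sub>m (K + \<omega> \<cdot>\<^sub>m M))) y z
    = of_real (1 + t * \<omega>) * sf n (cmat M) y z + of_real t * sf n (cmat K) y z"
proof -
  have Pc: "M + t \<cdot>\<^sub>m (K + \<omega> \<cdot>\<^sub>m M) \<in> carrier_mat n n" using M K by auto
  show ?thesis
    by (rule sf_mat) (use M K in \<open>auto simp: cmat_idx[OF Pc] cmat_idx[OF M] cmat_idx[OF K] algebra_simps\<close>)
qed



definition Jc :: "nat \<Rightarrow> complex vec \<Rightarrow> complex vec" where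
  "Jc n v = vec (2*n) (\<lambda>i. if i < n then cnj (v $ (n+i)) else - cnj (v $ (i - n)))"

lemma Jc_carrier[simp]: "Jc n v \<in> carrier_vec (2*n)" unfolding Jc_def by auto

lemma Jc_1: "i < n \<Longrightarrow> Jc n v $ i = cnj (v $ (n+i))" unfolding Jc_def by auto
lemma Jc_2: "i < n \<Longrightarrow> Jc n v $ (n+i) = - cnj (v $ i)" unfolding Jc_def by auto

lemma Jc_nz: assumes "v \<in> carrier_vec (2*n)" "v \<noteq> 0\<^sub>v (2*n)" shows "Jc n v \<noteq> 0\<^sub>v (2*n)"
proof
  assume J: "Jc n v = 0\<^sub>v (2*n)"
  have "v $ i = 0" if "i < 2*n" for i
  proof (cases "i < n")
    case True
    then have "Jc n v $ (n+i) = 0" using J by simp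
    then show ?thesis using Jc_2[OF True] by simp
  next
    case False
    then have "Jc n v $ (i-n) = 0" using J that by simp
    then show ?thesis using Jc_1[of "i-n" n v] False that by simp
  qed
  then have "v = 0\<^sub>v (2*n)" using assms(1) by (intro eq_vecI) auto
  then show False using assms by simp
qed

lemma sf_neg1: "sf n A (\<lambda>i. - x i) y = - sf n A x y"
  using sf_lin1[of n A "-1" x 0 x y] by simp
lemma sf_neg2: "sf n A x (\<lambda>i. - y i) = - sf n A x y"
  using sf_lin2[of n A x "-1" y 0 y] by simp

lemma E1_J:
  assumes M: "M \<in> carrier_mat n n" and K: "K \<in> carrier_mat n n"
    and v: "v \<in> carrier_vec (2*n)" and w: "w \<in> carrier_vec (2*n)"
  shows "cinner (calM n \<nu> \<omega> M K *\<^sub>v Jc n v) w = cnj (cinner (calM n \<nu> \<omega> M K *\<^sub>v v) (Jc n w))"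
proof -
  have a1: "sf n A (\<lambda>i. Jc n v $ i) y = sf n A (\<lambda>i. cnj (v $ (n+i))) y" for A y
    by (rule sf_cong) (auto simp: Jc_1)
  have a2: "sf n A (\<lambda>i. Jc n v $ (n+i)) y = - sf n A (\<lambda>i. cnj (v $ i)) y" for A y
    by (subst sf_neg1[symmetric], rule sf_cong) (auto simp: Jc_2)
  have b1: "sf n A y (\<lambda>i. Jc n w $ i) = sf n A y (\<lambda>i. cnj (w $ (n+i)))" for A y
    by (rule sf_cong) (auto simp: Jc_1)
  have b2: "sf n A y (\<lambda>i. Jc n w $ (n+i)) = - sf n A y (\<lambda>i. cnj (w $ i))" for A y
    by (subst sf_neg2[symmetric], rule sf_cong) (auto simp: Jc_2)
  show ?thesis
    unfolding E1[OF M K Jc_carrier w] E1[OF M K v Jc_carrier] a1 a2 b1 b2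
    by (simp add: sf_cnj[OF M] sf_cnj[OF K] algebra_simps)
qed

lemma E2_J:
  assumes P: "P \<in> carrier_mat n n"
    and v: "v \<in> carrier_vec (2*n)" and w: "w \<in> carrier_vec (2*n)"
  shows "cinner (calP n P *\<^sub>v Jc n v) w = - cnj (cinner (calP n P *\<^sub>v v) (Jc n w))"
proof -
  have a1: "sf n A (\<lambda>i. Jc n v $ i) y = sf n A (\<lambda>i. cnj (v $ (n+i))) y" for A y
    by (rule sf_cong) (auto simp: Jc_1)
  have a2: "sf n A (\<lambda>i. Jc n v $ (n+i)) y = - sf n A (\<lambda>i. cnj (v $ i)) y" for A y
    by (subst sf_neg1[symmetric], rule sf_cong) (auto simp: Jc_2)
  have b1: "sf n A y (\<lambda>i. Jc n w $ i) = sf n A y (\<lambda>i. cnj (w $ (n+i)))" for A y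
    by (rule sf_cong) (auto simp: Jc_1)
  have b2: "sf n A y (\<lambda>i. Jc n w $ (n+i)) = - sf n A y (\<lambda>i. cnj (w $ i))" for A y
    by (subst sf_neg2[symmetric], rule sf_cong) (auto simp: Jc_2)
  show ?thesis
    unfolding E2[OF P Jc_carrier w] E2[OF P v Jc_carrier] a1 a2 b1 b2
    by (simp add: sf_cnj[OF P] algebra_simps)
qed



lemma E2_pos:
  assumes P: "spd_real n P" and x: "x \<in> carrier_vec (2*n)" "x \<noteq> 0\<^sub>v (2*n)"
  shows "Re (cinner (calP n P *\<^sub>v x) x) > 0"
proof -
  have Pc: "P \<in> carrier_mat n n" using P unfolding spd_real_def by auto
  obtain i where i: "i < 2*n" "x $ i \<noteq> 0" using x by (metis carrier_vecD eq_vecI index_zero_vec(1,2))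
  have n1: "Re (sf n (cmat P) (\<lambda>i. x$i) (\<lambda>i. x$i)) \<ge> 0" "Re (sf n (cmat P) (\<lambda>i. x$(n+i)) (\<lambda>i. x$(n+i))) \<ge> 0"
    using sf_nonneg[OF P] by auto
  have "Re (sf n (cmat P) (\<lambda>i. x$i) (\<lambda>i. x$i)) > 0 \<or> Re (sf n (cmat P) (\<lambda>i. x$(n+i)) (\<lambda>i. x$(n+i))) > 0"
  proof (cases "i < n")
    case True then show ?thesis using sf_pos[OF P True, of "\<lambda>i. x$i"] i by auto
  next
    case False
    then have "i - n < n" "x $ (n + (i - n)) \<noteq> 0" using i by auto
    then show ?thesis using sf_pos[OF P, of "i-n" "\<lambda>i. x$(n+i)"] by auto
  qed
  then show ?thesis unfolding E2[OF Pc x(1) x(1)] using n1 by auto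
qed

lemma calP_inv:
  assumes P: "spd_real n P"
  shows "minv (calP n P) * calP n P = 1\<^sub>m (2*n) \<and> calP n P * minv (calP n P) = 1\<^sub>m (2*n)
         \<and> minv (calP n P) \<in> carrier_mat (2*n) (2*n)"
proof -
  have Pc: "P \<in> carrier_mat n n" using P unfolding spd_real_def by auto
  have C: "calP n P \<in> carrier_mat (2*n) (2*n)" by (rule calP_carrier[OF Pc])
  have "det (calP n P) \<noteq> 0"
  proof
    assume "det (calP n P) = 0"
    then obtain v where v: "v \<in> carrier_vec (2*n)" "v \<noteq> 0\<^sub>v (2*n)" "calP n P *\<^sub>v v = 0\<^sub>v (2*n)"
      using det_0_iff_vec_prod_zero_field[OF C] by auto
    have "cinner (calP n P *\<^sub>v v) v = 0" using v(1,3) unfolding cinner_def by simp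
    then show False using E2_pos[OF P v(1,2)] by simp
  qed
  from det_non_zero_imp_unit[OF C this, of "()"]
  have U: "calP n P \<in> Units (ring_mat TYPE(complex) (2*n) ())" .
  then obtain B where "mat_inverse (calP n P) = Some B"
    by (cases "mat_inverse (calP n P)") (use U mat_inverse(1)[OF C, where b="()"] in auto)
  then show ?thesis using mat_inverse(2)[OF C] unfolding minv_def by auto
qed

lemma cinner_smult: "u \<in> carrier_vec m \<Longrightarrow> w \<in> carrier_vec m \<Longrightarrow> cinner (k \<cdot>\<^sub>v u) w = k * cinner u w"
  unfolding cinner_def by (rule smult_scalar_prod_distrib) auto

lemma eig_iff:
  assumes P: "spd_real n P" and M: "M \<in> carrier_mat n n" and K: "K \<in> carrier_mat n n"
  shows "eigenvalue (minv (calP n P) * calM n \<nu> \<omega> M K) z \<longleftrightarrow>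
    (\<exists>v. v \<in> carrier_vec (2*n) \<and> v \<noteq> 0\<^sub>v (2*n) \<and> calM n \<nu> \<omega> M K *\<^sub>v v = z \<cdot>\<^sub>v (calP n P *\<^sub>v v))"
proof -
  have Pc: "P \<in> carrier_mat n n" using P unfolding spd_real_def by auto
  have C: "calP n P \<in> carrier_mat (2*n) (2*n)" by (rule calP_carrier[OF Pc])
  have CM: "calM n \<nu> \<omega> M K \<in> carrier_mat (2*n) (2*n)" by (rule calM_carrier[OF M K])
  note inv = calP_inv[OF P]
  let ?Pi = "minv (calP n P)" and ?M = "calM n \<nu> \<omega> M K" and ?P = "calP n P"
  have Pi: "?Pi \<in> carrier_mat (2*n) (2*n)" "?Pi * ?P = 1\<^sub>m (2*n)" "?P * ?Pi = 1\<^sub>m (2*n)" using inv by auto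
  have d: "dim_row (?Pi * ?M) = 2*n" using inv by auto
  have eq: "(?Pi * ?M) *\<^sub>v v = z \<cdot>\<^sub>v v \<longleftrightarrow> ?M *\<^sub>v v = z \<cdot>\<^sub>v (?P *\<^sub>v v)" if v: "v \<in> carrier_vec (2*n)" for v
  proof
    assume h: "(?Pi * ?M) *\<^sub>v v = z \<cdot>\<^sub>v v"
    have "?P *\<^sub>v ((?Pi * ?M) *\<^sub>v v) = (?P * (?Pi * ?M)) *\<^sub>v v"
    proof -
      have PM: "?Pi * ?M \<in> carrier_mat (2*n) (2*n)" using inv CM by auto
      show ?thesis by (rule assoc_mult_mat_vec[OF C PM v, symmetric])
    qed
    also have "?P * (?Pi * ?M) = (?P * ?Pi) * ?M" using inv CM C by (metis assoc_mult_mat)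
    also have "(?P * ?Pi) * ?M = ?M" using inv CM by simp
    finally have "?M *\<^sub>v v = ?P *\<^sub>v ((?Pi * ?M) *\<^sub>v v)" by simp
    also have "\<dots> = z \<cdot>\<^sub>v (?P *\<^sub>v v)" unfolding h using C v by (simp add: mult_mat_vec)
    finally show "?M *\<^sub>v v = z \<cdot>\<^sub>v (?P *\<^sub>v v)" .
  next
    assume h: "?M *\<^sub>v v = z \<cdot>\<^sub>v (?P *\<^sub>v v)"
    have "(?Pi * ?M) *\<^sub>v v = ?Pi *\<^sub>v (?M *\<^sub>v v)" by (rule assoc_mult_mat_vec[OF Pi(1) CM v])
    also have "\<dots> = z \<cdot>\<^sub>v (?Pi *\<^sub>v (?P *\<^sub>v v))" unfolding h using Pi C v by (simp add: mult_mat_vec)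
    also have "?Pi *\<^sub>v (?P *\<^sub>v v) = v" using assoc_mult_mat_vec[OF Pi(1) C v] Pi(2) v by simp
    finally show "(?Pi * ?M) *\<^sub>v v = z \<cdot>\<^sub>v v" .
  qed
  show ?thesis unfolding eigenvalue_def eigenvector_def d using eq by blast
qed



lemma herm_im: "symr n A \<Longrightarrow> Im (sf n (cmat A) x x) = 0"
  using sf_herm[of n A x x] by (metis cnj.simps(2) complex_cnj_cancel_iff eq_iff_diff_eq_0 neg_equal_zero) 

lemma E2_real:
  assumes P: "spd_real n P" and x: "x \<in> carrier_vec (2*n)"
  shows "Im (cinner (calP n P *\<^sub>v x) x) = 0"
proof -
  have Pc: "P \<in> carrier_mat n n" using P unfolding spd_real_def by auto
  show ?thesis unfolding E2[OF Pc x x] using herm_im[OF spd_symr[OF P]] by simp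
qed

lemma E1_real:
  assumes M: "spd_real n M" and K: "spd_real n K" and x: "x \<in> carrier_vec (2*n)"
  shows "Im (cinner (calM n \<nu> \<omega> M K *\<^sub>v x) x) = 0"
proof -
  have Mc: "M \<in> carrier_mat n n" using M unfolding spd_real_def by auto
  have Kc: "K \<in> carrier_mat n n" using K unfolding spd_real_def by auto
  have SM: "symr n M" and SK: "symr n K" using M K spd_symr by auto
  have h1: "sf n (cmat K) (\<lambda>i. x$(n+i)) (\<lambda>i. x$i) = cnj (sf n (cmat K) (\<lambda>i. x$i) (\<lambda>i. x$(n+i)))"
    by (rule sf_herm[OF SK])
  have h2: "sf n (cmat M) (\<lambda>i. x$(n+i)) (\<lambda>i. x$i) = cnj (sf n (cmat M) (\<lambda>i. x$i) (\<lambda>i. x$(n+i)))"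
    by (rule sf_herm[OF SM])
  show ?thesis unfolding E1[OF Mc Kc x x] h1 h2 using herm_im[OF SM] by (simp add: algebra_simps)
qed

lemma cinner_minus: "u \<in> carrier_vec m \<Longrightarrow> v \<in> carrier_vec m \<Longrightarrow> w \<in> carrier_vec m \<Longrightarrow>
  cinner (u - v) w = cinner u w - cinner v w"
  unfolding cinner_def by (rule minus_scalar_prod_distrib) auto

lemma vec_minus_0:
  assumes a: "a \<in> carrier_vec m" and b: "b \<in> carrier_vec m" and e: "a - b = 0\<^sub>v m"
  shows "a = (b :: complex vec)"
proof (rule eq_vecI)
  fix i assume i: "i < dim_vec b"
  have "(a - b) $ i = 0" using e i b by simp
  then show "a $ i = b $ i" using i by simp
next
  show "dim_vec a = dim_vec b" using a b by simp
qed

lemma part1: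
  assumes M: "spd_real n M" and K: "spd_real n K" and P: "spd_real n P"
    and ev: "eigenvalue (minv (calP n P) * calM n \<nu> \<omega> M K) z"
  shows "Im z = 0 \<and> eigenvalue (minv (calP n P) * calM n \<nu> \<omega> M K) (- z)"
proof -
  have Mc: "M \<in> carrier_mat n n" using M unfolding spd_real_def by auto
  have Kc: "K \<in> carrier_mat n n" using K unfolding spd_real_def by auto
  have Pc: "P \<in> carrier_mat n n" using P unfolding spd_real_def by auto
  have C: "calP n P \<in> carrier_mat (2*n) (2*n)" by (rule calP_carrier[OF Pc])
  have CM: "calM n \<nu> \<omega> M K \<in> carrier_mat (2*n) (2*n)" by (rule calM_carrier[OF Mc Kc])
  let ?M = "calM n \<nu> \<omega> M K" and ?P = "calP n P"
  obtain v where v: "v \<in> carrier_vec (2*n)" "v \<noteq> 0\<^sub>v (2*n)" "?M *\<^sub>v v = z \<cdot>\<^sub>v (?P *\<^sub>v v)"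
    using ev eig_iff[OF P Mc Kc] by auto
  have key: "cinner (?M *\<^sub>v v) w = z * cinner (?P *\<^sub>v v) w" if "w \<in> carrier_vec (2*n)" for w
    unfolding v(3) using that C v(1) by (simp add: cinner_smult[of _ "2*n"])
  have z: "Im z = 0"
  proof -
    have e: "Im (cinner (?M *\<^sub>v v) v) = 0" by (rule E1_real[OF M K v(1)])
    have "Im (z * cinner (?P *\<^sub>v v) v) = 0" using e unfolding key[OF v(1)] .
    then have "Im z * Re (cinner (?P *\<^sub>v v) v) = 0" using E2_real[OF P v(1)] by simp
    then show ?thesis using E2_pos[OF P v(1,2)] by simp
  qed
  let ?u = "Jc n v"
  have ku: "cinner (?M *\<^sub>v ?u) w = - z * cinner (?P *\<^sub>v ?u) w" if w: "w \<in> carrier_vec (2*n)" for w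
  proof -
    have "cinner (?M *\<^sub>v ?u) w = cnj (z * cinner (?P *\<^sub>v v) (Jc n w))"
      unfolding E1_J[OF Mc Kc v(1) w] key[OF Jc_carrier] ..
    also have "\<dots> = cnj z * cnj (cinner (?P *\<^sub>v v) (Jc n w))" by simp
    also have "cnj z = z" using z by (simp add: complex_eq_iff)
    finally show ?thesis unfolding E2_J[OF Pc v(1) w] by simp
  qed
  define r where "r = ?M *\<^sub>v ?u - (- z) \<cdot>\<^sub>v (?P *\<^sub>v ?u)"
  have r: "r \<in> carrier_vec (2*n)" unfolding r_def using CM C by auto
  have "cinner r r = cinner (?M *\<^sub>v ?u) r - cinner ((- z) \<cdot>\<^sub>v (?P *\<^sub>v ?u)) r"
    unfolding r_def by (rule cinner_minus[of _ "2*n"]) (use CM C r[unfolded r_def] in auto)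
  also have "\<dots> = 0" using ku[OF r] C r by (simp add: cinner_smult[of _ "2*n"])
  finally have "r \<bullet>c r = 0" unfolding cinner_def .
  then have r0: "r = 0\<^sub>v (2*n)" using r by simp
  have "?M *\<^sub>v ?u = (- z) \<cdot>\<^sub>v (?P *\<^sub>v ?u)"
    by (rule vec_minus_0[of _ "2*n"]) (use CM C r0 in \<open>auto simp: r_def\<close>)
  then have "eigenvalue (minv ?P * ?M) (- z)"
    unfolding eig_iff[OF P Mc Kc] using Jc_nz[OF v(1,2)] Jc_carrier by blast
  then show ?thesis using z by simp
qed


lemma lag6:
  fixes u1 u2 u3 u4 u5 u6 v1 v2 v3 v4 v5 v6 :: real
  shows "(u1*v1+u2*v2+u3*v3+u4*v4+u5*v5+u6*v6)^2 \<le> (u1^2+u2^2+u3^2+u4^2+u5^2+u6^2)*(v1^2+v2^2+v3^2+v4^2+v5^2+v6^2)"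
proof -
  have "(u1^2+u2^2+u3^2+u4^2+u5^2+u6^2)*(v1^2+v2^2+v3^2+v4^2+v5^2+v6^2) - (u1*v1+u2*v2+u3*v3+u4*v4+u5*v5+u6*v6)^2
    = (u1*v2-u2*v1)^2 + (u1*v3-u3*v1)^2 + (u1*v4-u4*v1)^2 + (u1*v5-u5*v1)^2 + (u1*v6-u6*v1)^2
    + (u2*v3-u3*v2)^2 + (u2*v4-u4*v2)^2 + (u2*v5-u5*v2)^2 + (u2*v6-u6*v2)^2
    + (u3*v4-u4*v3)^2 + (u3*v5-u5*v3)^2 + (u3*v6-u6*v3)^2
    + (u4*v5-u5*v4)^2 + (u4*v6-u6*v4)^2 + (u5*v6-u6*v5)^2"
    by (simp add: power2_eq_square algebra_simps)
  moreover have "0 \<le> (u1*v2-u2*v1)^2 + (u1*v3-u3*v1)^2 + (u1*v4-u4*v1)^2 + (u1*v5-u5*v1)^2 + (u1*v6-u6*v1)^2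
    + (u2*v3-u3*v2)^2 + (u2*v4-u4*v2)^2 + (u2*v5-u5*v2)^2 + (u2*v6-u6*v2)^2
    + (u3*v4-u4*v3)^2 + (u3*v5-u5*v3)^2 + (u3*v6-u6*v3)^2
    + (u4*v5-u5*v4)^2 + (u4*v6-u6*v4)^2 + (u5*v6-u6*v5)^2" by simp
  ultimately show ?thesis by linarith
qed

lemma cs6:
  fixes u1 u2 u3 u4 u5 u6 v1 v2 v3 v4 v5 v6 :: real
  shows "u1*v1+u2*v2+u3*v3+u4*v4+u5*v5+u6*v6 \<le> sqrt (u1^2+u2^2+u3^2+u4^2+u5^2+u6^2) * sqrt (v1^2+v2^2+v3^2+v4^2+v5^2+v6^2)"
  by (metis lag6 real_le_rsqrt real_sqrt_mult)

lemma cs2: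
  fixes u1 u2 v1 v2 :: real
  shows "u1*v1+u2*v2 \<le> sqrt (u1^2+u2^2) * sqrt (v1^2+v2^2)"
  using cs6[of u1 v1 u2 v2 0 0 0 0 0 0 0 0] by simp


lemma reE2:
  assumes M: "M \<in> carrier_mat n n" and K: "K \<in> carrier_mat n n" and x: "x \<in> carrier_vec (2*n)"
  shows "Re (cinner (calP n (M + t \<cdot>\<^sub>m (K + \<omega> \<cdot>\<^sub>m M)) *\<^sub>v x) x)
    = (1 + t*\<omega>) * (Re (sf n (cmat M) (\<lambda>i. x$i) (\<lambda>i. x$i)) + Re (sf n (cmat M) (\<lambda>i. x$(n+i)) (\<lambda>i. x$(n+i))))
    + t * (Re (sf n (cmat K) (\<lambda>i. x$i) (\<lambda>i. x$i)) + Re (sf n (cmat K) (\<lambda>i. x$(n+i)) (\<lambda>i. x$(n+i))))"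
proof -
  have Pc: "M + t \<cdot>\<^sub>m (K + \<omega> \<cdot>\<^sub>m M) \<in> carrier_mat n n" using M K by auto
  show ?thesis unfolding E2[OF Pc x x] sfP[OF M K] by (simp add: algebra_simps)
qed

lemma tri6:
  fixes A B C D E F :: complex and t \<omega> :: real
  assumes t: "t \<ge> 0" and om: "\<omega> \<ge> 0"
  shows "cmod (A + (of_real t * B + (- of_real t * \<i> * of_real \<omega>) * C) + (of_real t * D + (of_real t * \<i> * of_real \<omega>) * E) - F)
    \<le> cmod A + t * cmod B + t * \<omega> * cmod C + t * cmod D + t * \<omega> * cmod E + cmod F"
proof -
  let ?Y = "of_real t * B + (- of_real t * \<i> * of_real \<omega>) * C" and ?Z = "of_real t * D + (of_real t * \<i> * of_real \<omega>) * E"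
  have 1: "cmod (A + ?Y + ?Z - F) \<le> cmod (A + ?Y + ?Z) + cmod F" by (rule norm_triangle_ineq4)
  have 2: "cmod (A + ?Y + ?Z) \<le> cmod (A + ?Y) + cmod ?Z" by (rule norm_triangle_ineq)
  have 3: "cmod (A + ?Y) \<le> cmod A + cmod ?Y" by (rule norm_triangle_ineq)
  have 4: "cmod ?Y \<le> cmod (of_real t * B) + cmod ((- of_real t * \<i> * of_real \<omega>) * C)" by (rule norm_triangle_ineq)
  have 5: "cmod ?Z \<le> cmod (of_real t * D) + cmod ((of_real t * \<i> * of_real \<omega>) * E)" by (rule norm_triangle_ineq)
  have 6: "cmod (of_real t * B) = t * cmod B" "cmod (of_real t * D) = t * cmod D"
    using t by (simp_all add: norm_mult)
  have 7: "cmod ((- of_real t * \<i> * of_real \<omega>) * C) = t * \<omega> * cmod C" "cmod ((of_real t * \<i> * of_real \<omega>) * E) = t * \<omega> * cmod E"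
    using t om by (simp_all add: norm_mult)
  show ?thesis using 1 2 3 4 5 6 7 by linarith
qed

lemma bound1:
  assumes M: "spd_real n M" and K: "spd_real n K" and nu: "\<nu> \<ge> 0" and om: "\<omega> \<ge> 0"
    and x: "x \<in> carrier_vec (2*n)" and w: "w \<in> carrier_vec (2*n)"
  shows "cmod (cinner (calM n \<nu> \<omega> M K *\<^sub>v x) w)
     \<le> pnorm (calP n (M + sqrt \<nu> \<cdot>\<^sub>m (K + \<omega> \<cdot>\<^sub>m M))) x * pnorm (calP n (M + sqrt \<nu> \<cdot>\<^sub>m (K + \<omega> \<cdot>\<^sub>m M))) w"
proof -
  have Mc: "M \<in> carrier_mat n n" using M unfolding spd_real_def by auto
  have Kc: "K \<in> carrier_mat n n" using K unfolding spd_real_def by auto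
  define t where "t = sqrt \<nu>"
  have t: "t \<ge> 0" unfolding t_def using nu by simp
  let ?M = "sf n (cmat M)" and ?K = "sf n (cmat K)"
  let ?x1 = "\<lambda>i. x$i" and ?x2 = "\<lambda>i. x$(n+i)" and ?w1 = "\<lambda>i. w$i" and ?w2 = "\<lambda>i. w$(n+i)"
  define b1 where "b1 = sqrt (Re (?M ?x1 ?x1))"
  define b2 where "b2 = sqrt (Re (?M ?x2 ?x2))"
  define c1 where "c1 = sqrt (Re (?K ?x1 ?x1))"
  define c2 where "c2 = sqrt (Re (?K ?x2 ?x2))"
  define a1 where "a1 = sqrt (Re (?M ?w1 ?w1))"
  define a2 where "a2 = sqrt (Re (?M ?w2 ?w2))"
  define d1 where "d1 = sqrt (Re (?K ?w1 ?w1))"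
  define d2 where "d2 = sqrt (Re (?K ?w2 ?w2))"
  have nn: "b1 \<ge> 0" "b2 \<ge> 0" "c1 \<ge> 0" "c2 \<ge> 0" "a1 \<ge> 0" "a2 \<ge> 0" "d1 \<ge> 0" "d2 \<ge> 0"
    unfolding b1_def b2_def c1_def c2_def a1_def a2_def d1_def d2_def by (simp_all add: sf_nonneg[OF M] sf_nonneg[OF K])
  have sq: "b1^2 = Re (?M ?x1 ?x1)" "b2^2 = Re (?M ?x2 ?x2)" "c1^2 = Re (?K ?x1 ?x1)" "c2^2 = Re (?K ?x2 ?x2)"
    "a1^2 = Re (?M ?w1 ?w1)" "a2^2 = Re (?M ?w2 ?w2)" "d1^2 = Re (?K ?w1 ?w1)" "d2^2 = Re (?K ?w2 ?w2)"
    unfolding b1_def b2_def c1_def c2_def a1_def a2_def d1_def d2_def by (simp_all add: sf_nonneg[OF M] sf_nonneg[OF K])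
  have e1: "cmod (?M ?x1 ?w1) \<le> b1 * a1" unfolding b1_def a1_def by (rule cs[OF M])
  have e2: "cmod (?K ?x2 ?w1) \<le> c2 * d1" unfolding c2_def d1_def by (rule cs[OF K])
  have e3: "cmod (?M ?x2 ?w1) \<le> b2 * a1" unfolding b2_def a1_def by (rule cs[OF M])
  have e4: "cmod (?K ?x1 ?w2) \<le> c1 * d2" unfolding c1_def d2_def by (rule cs[OF K])
  have e5: "cmod (?M ?x1 ?w2) \<le> b1 * a2" unfolding b1_def a2_def by (rule cs[OF M])
  have e6: "cmod (?M ?x2 ?w2) \<le> b2 * a2" unfolding b2_def a2_def by (rule cs[OF M])
  have tri: "cmod (cinner (calM n \<nu> \<omega> M K *\<^sub>v x) w) \<le> cmod (?M ?x1 ?w1) + t * cmod (?K ?x2 ?w1) + t * \<omega> * cmod (?M ?x2 ?w1)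
      + t * cmod (?K ?x1 ?w2) + t * \<omega> * cmod (?M ?x1 ?w2) + cmod (?M ?x2 ?w2)"
    unfolding E1[OF Mc Kc x w] t_def[symmetric] by (rule tri6[OF t om])
  define s where "s = sqrt t"
  define r where "r = sqrt (t * \<omega>)"
  have ss: "s * s = t" unfolding s_def using t by simp
  have rr: "r * r = t * \<omega>" unfolding r_def using t om by simp
  have "b1 * a1 + t * (c2 * d1) + t * \<omega> * (b2 * a1) + t * (c1 * d2) + t * \<omega> * (b1 * a2) + b2 * a2
     = b1 * a1 + (s*c2) * (s*d1) + (r*b2) * (r*a1) + (s*c1) * (s*d2) + (r*b1)*(r*a2) + b2 * a2"
    using ss rr by (simp add: algebra_simps)
  also have "\<dots> \<le> sqrt (b1^2 + (s*c2)^2 + (r*b2)^2 + (s*c1)^2 + (r*b1)^2 + b2^2)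
     * sqrt (a1^2 + (s*d1)^2 + (r*a1)^2 + (s*d2)^2 + (r*a2)^2 + a2^2)" by (rule cs6)
  also have "b1^2 + (s*c2)^2 + (r*b2)^2 + (s*c1)^2 + (r*b1)^2 + b2^2 = Re (cinner (calP n (M + t \<cdot>\<^sub>m (K + \<omega> \<cdot>\<^sub>m M)) *\<^sub>v x) x)"
    unfolding reE2[OF Mc Kc x] sq[symmetric] power_mult_distrib power2_eq_square by (simp add: ss rr algebra_simps)
  also have "a1^2 + (s*d1)^2 + (r*a1)^2 + (s*d2)^2 + (r*a2)^2 + a2^2 = Re (cinner (calP n (M + t \<cdot>\<^sub>m (K + \<omega> \<cdot>\<^sub>m M)) *\<^sub>v w) w)"
    unfolding reE2[OF Mc Kc w] sq[symmetric] power_mult_distrib power2_eq_square by (simp add: ss rr algebra_simps)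
  finally have "b1 * a1 + t * (c2 * d1) + t * \<omega> * (b2 * a1) + t * (c1 * d2) + t * \<omega> * (b1 * a2) + b2 * a2
     \<le> pnorm (calP n (M + t \<cdot>\<^sub>m (K + \<omega> \<cdot>\<^sub>m M))) x * pnorm (calP n (M + t \<cdot>\<^sub>m (K + \<omega> \<cdot>\<^sub>m M))) w"
    unfolding pnorm_def .
  moreover have "cmod (cinner (calM n \<nu> \<omega> M K *\<^sub>v x) w) \<le> b1 * a1 + t * (c2 * d1) + t * \<omega> * (b2 * a1) + t * (c1 * d2) + t * \<omega> * (b1 * a2) + b2 * a2"
    using tri e1 e2 e3 e4 e5 e6 t om mult_left_mono[OF e2 t] mult_left_mono[OF e4 t]
      mult_left_mono[OF e3 mult_nonneg_nonneg[OF t om]] mult_left_mono[OF e5 mult_nonneg_nonneg[OF t om]]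
    by linarith
  ultimately show ?thesis unfolding t_def by linarith
qed



definition W0 :: "nat \<Rightarrow> complex vec \<Rightarrow> complex vec" where
  "W0 n x = vec (2*n) (\<lambda>i. if i < n then 1 * x$i + (1 - \<i>) * x$(n+i) else (1 + \<i>) * x$(i-n) + (-1) * x$i)"

lemma W0_carrier[simp]: "W0 n x \<in> carrier_vec (2*n)" unfolding W0_def by auto

lemma W0_1: "sf n A (\<lambda>i. W0 n x $ i) = sf n A (\<lambda>i. 1 * x$i + (1 - \<i>) * x$(n+i))"
  by (intro ext sf_cong) (auto simp: W0_def)
lemma W0_1': "sf n A y (\<lambda>i. W0 n x $ i) = sf n A y (\<lambda>i. 1 * x$i + (1 - \<i>) * x$(n+i))"
  by (intro ext sf_cong) (auto simp: W0_def)
lemma W0_2: "sf n A (\<lambda>i. W0 n x $ (n+i)) = sf n A (\<lambda>i. (1 + \<i>) * x$i + (-1) * x$(n+i))"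
  by (intro ext sf_cong) (auto simp: W0_def)
lemma W0_2': "sf n A y (\<lambda>i. W0 n x $ (n+i)) = sf n A y (\<lambda>i. (1 + \<i>) * x$i + (-1) * x$(n+i))"
  by (intro ext sf_cong) (auto simp: W0_def)

lemma E1_W0:
  assumes M: "spd_real n M" and K: "spd_real n K" and x: "x \<in> carrier_vec (2*n)"
  shows "Re (cinner (calM n \<nu> \<omega> M K *\<^sub>v x) (W0 n x)) = Re (cinner (calP n (M + sqrt \<nu> \<cdot>\<^sub>m (K + \<omega> \<cdot>\<^sub>m M)) *\<^sub>v x) x)"
proof -
  have Mc: "M \<in> carrier_mat n n" using M unfolding spd_real_def by auto
  have Kc: "K \<in> carrier_mat n n" using K unfolding spd_real_def by auto
  have SM: "symr n M" and SK: "symr n K" using M K spd_symr by auto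
  have h1: "sf n (cmat K) (\<lambda>i. x$(n+i)) (\<lambda>i. x$i) = cnj (sf n (cmat K) (\<lambda>i. x$i) (\<lambda>i. x$(n+i)))"
    by (rule sf_herm[OF SK])
  have h2: "sf n (cmat M) (\<lambda>i. x$(n+i)) (\<lambda>i. x$i) = cnj (sf n (cmat M) (\<lambda>i. x$i) (\<lambda>i. x$(n+i)))"
    by (rule sf_herm[OF SM])
  show ?thesis
    unfolding E1[OF Mc Kc x W0_carrier] reE2[OF Mc Kc x] W0_1' W0_2' sf_lin2 h1 h2
    using herm_im[OF SM] herm_im[OF SK] by (simp add: algebra_simps)
qed

lemma E2_W0:
  assumes P: "spd_real n P" and x: "x \<in> carrier_vec (2*n)"
  shows "Re (cinner (calP n P *\<^sub>v W0 n x) (W0 n x)) = 3 * Re (cinner (calP n P *\<^sub>v x) x)"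
proof -
  have Pc: "P \<in> carrier_mat n n" using P unfolding spd_real_def by auto
  have SP: "symr n P" using P spd_symr by auto
  have h: "sf n (cmat P) (\<lambda>i. x$(n+i)) (\<lambda>i. x$i) = cnj (sf n (cmat P) (\<lambda>i. x$i) (\<lambda>i. x$(n+i)))"
    by (rule sf_herm[OF SP])
  show ?thesis
    unfolding E2[OF Pc x x] E2[OF Pc W0_carrier W0_carrier] W0_1 W0_2 W0_1' W0_2' sf_lin1 sf_lin2 h
    using herm_im[OF SP] by (simp add: algebra_simps)
qed



lemma E2_cs:
  assumes P: "spd_real n P" and x: "x \<in> carrier_vec (2*n)" and w: "w \<in> carrier_vec (2*n)"
  shows "cmod (cinner (calP n P *\<^sub>v x) w) \<le> pnorm (calP n P) x * pnorm (calP n P) w"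
proof -
  have Pc: "P \<in> carrier_mat n n" using P unfolding spd_real_def by auto
  let ?P = "sf n (cmat P)"
  let ?x1 = "\<lambda>i. x$i" and ?x2 = "\<lambda>i. x$(n+i)" and ?w1 = "\<lambda>i. w$i" and ?w2 = "\<lambda>i. w$(n+i)"
  define p1 where "p1 = sqrt (Re (?P ?x1 ?x1))"
  define p2 where "p2 = sqrt (Re (?P ?x2 ?x2))"
  define q1 where "q1 = sqrt (Re (?P ?w1 ?w1))"
  define q2 where "q2 = sqrt (Re (?P ?w2 ?w2))"
  have sq: "p1^2 = Re (?P ?x1 ?x1)" "p2^2 = Re (?P ?x2 ?x2)" "q1^2 = Re (?P ?w1 ?w1)" "q2^2 = Re (?P ?w2 ?w2)"
    unfolding p1_def p2_def q1_def q2_def by (simp_all add: sf_nonneg[OF P])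
  have "cmod (cinner (calP n P *\<^sub>v x) w) \<le> cmod (?P ?x1 ?w1) + cmod (?P ?x2 ?w2)"
    unfolding E2[OF Pc x w] by (rule norm_triangle_ineq)
  also have "\<dots> \<le> p1 * q1 + p2 * q2"
    using cs[OF P, of ?x1 ?w1] cs[OF P, of ?x2 ?w2] unfolding p1_def p2_def q1_def q2_def by linarith
  also have "\<dots> \<le> sqrt (p1^2 + p2^2) * sqrt (q1^2 + q2^2)" by (rule cs2)
  also have "\<dots> = pnorm (calP n P) x * pnorm (calP n P) w"
    unfolding pnorm_def E2[OF Pc x x] E2[OF Pc w w] sq by simp
  finally show ?thesis .
qed

lemma pnorm_pos:
  assumes P: "spd_real n P" and x: "x \<in> nzvecs (2*n)"
  shows "pnorm (calP n P) x > 0"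
  using E2_pos[OF P] x unfolding pnorm_def nzvecs_def by auto

lemma ratio_le1:
  assumes M: "spd_real n M" and K: "spd_real n K" and nu: "\<nu> > 0" and om: "\<omega> \<ge> 0"
    and x: "x \<in> nzvecs (2*n)" and w: "w \<in> nzvecs (2*n)"
  shows "ratio (calM n \<nu> \<omega> M K) (calP n (M + sqrt \<nu> \<cdot>\<^sub>m (K + \<omega> \<cdot>\<^sub>m M))) x w \<le> 1"
proof -
  have P: "spd_real n (M + sqrt \<nu> \<cdot>\<^sub>m (K + \<omega> \<cdot>\<^sub>m M))" by (rule P_spd[OF M K _ om]) (use nu in simp)
  have b: "cmod (cinner (calM n \<nu> \<omega> M K *\<^sub>v x) w)
     \<le> pnorm (calP n (M + sqrt \<nu> \<cdot>\<^sub>m (K + \<omega> \<cdot>\<^sub>m M))) x * pnorm (calP n (M + sqrt \<nu> \<cdot>\<^sub>m (K + \<omega> \<cdot>\<^sub>m M))) w"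
    by (rule bound1[OF M K _ om]) (use nu x w in \<open>auto simp: nzvecs_def\<close>)
  have "pnorm (calP n (M + sqrt \<nu> \<cdot>\<^sub>m (K + \<omega> \<cdot>\<^sub>m M))) x * pnorm (calP n (M + sqrt \<nu> \<cdot>\<^sub>m (K + \<omega> \<cdot>\<^sub>m M))) w > 0"
    using pnorm_pos[OF P x] pnorm_pos[OF P w] by simp
  then show ?thesis unfolding ratio_def using b by simp
qed

lemma ratio_W0:
  assumes M: "spd_real n M" and K: "spd_real n K" and nu: "\<nu> > 0" and om: "\<omega> \<ge> 0"
    and x: "x \<in> nzvecs (2*n)"
  shows "W0 n x \<in> nzvecs (2*n) \<and> ratio (calM n \<nu> \<omega> M K) (calP n (M + sqrt \<nu> \<cdot>\<^sub>m (K + \<omega> \<cdot>\<^sub>m M))) x (W0 n x) \<ge> 1 / sqrt 3"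
proof -
  let ?P = "M + sqrt \<nu> \<cdot>\<^sub>m (K + \<omega> \<cdot>\<^sub>m M)"
  have P: "spd_real n ?P" by (rule P_spd[OF M K _ om]) (use nu in simp)
  have Pc: "?P \<in> carrier_mat n n" using P unfolding spd_real_def by auto
  have xc: "x \<in> carrier_vec (2*n)" "x \<noteq> 0\<^sub>v (2*n)" using x unfolding nzvecs_def by auto
  define R where "R = Re (cinner (calP n ?P *\<^sub>v x) x)"
  have R: "R > 0" unfolding R_def by (rule E2_pos[OF P xc])
  have w3: "Re (cinner (calP n ?P *\<^sub>v W0 n x) (W0 n x)) = 3 * R" unfolding R_def by (rule E2_W0[OF P xc(1)])
  have wnz: "W0 n x \<noteq> 0\<^sub>v (2*n)"
  proof
    assume "W0 n x = 0\<^sub>v (2*n)"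
    then have "Re (cinner (calP n ?P *\<^sub>v W0 n x) (W0 n x)) = 0"
      using calP_carrier[OF Pc] by (simp add: cinner_def)
    then show False using w3 R by simp
  qed
  have px: "pnorm (calP n ?P) x = sqrt R" unfolding pnorm_def R_def ..
  have pw: "pnorm (calP n ?P) (W0 n x) = sqrt 3 * sqrt R" unfolding pnorm_def w3 by (simp add: real_sqrt_mult)
  have e: "cmod (cinner (calM n \<nu> \<omega> M K *\<^sub>v x) (W0 n x)) \<ge> R"
    using complex_Re_le_cmod[of "cinner (calM n \<nu> \<omega> M K *\<^sub>v x) (W0 n x)"] E1_W0[OF M K xc(1)]
    unfolding R_def by simp
  have d: "pnorm (calP n ?P) x * pnorm (calP n ?P) (W0 n x) = sqrt 3 * R"
    unfolding px pw using R by (simp add: algebra_simps)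
  have "1 / sqrt 3 = R / (sqrt 3 * R)" using R by simp
  also have "\<dots> \<le> cmod (cinner (calM n \<nu> \<omega> M K *\<^sub>v x) (W0 n x)) / (sqrt 3 * R)"
    using e R by (intro divide_right_mono) auto
  finally have "ratio (calM n \<nu> \<omega> M K) (calP n ?P) x (W0 n x) \<ge> 1 / sqrt 3"
    unfolding ratio_def d .
  then show ?thesis using wnz unfolding nzvecs_def by auto
qed



lemma eig_bound:
  assumes M: "spd_real n M" and K: "spd_real n K" and nu: "\<nu> > 0" and om: "\<omega> \<ge> 0"
    and ev: "eigenvalue (minv (calP n (M + sqrt \<nu> \<cdot>\<^sub>m (K + \<omega> \<cdot>\<^sub>m M))) * calM n \<nu> \<omega> M K) z"
  shows "Im z = 0 \<and> 1 / sqrt 3 \<le> \<bar>Re z\<bar> \<and> \<bar>Re z\<bar> \<le> 1"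
proof -
  let ?P = "M + sqrt \<nu> \<cdot>\<^sub>m (K + \<omega> \<cdot>\<^sub>m M)"
  have P: "spd_real n ?P" by (rule P_spd[OF M K _ om]) (use nu in simp)
  have Mc: "M \<in> carrier_mat n n" using M unfolding spd_real_def by auto
  have Kc: "K \<in> carrier_mat n n" using K unfolding spd_real_def by auto
  have Pc: "?P \<in> carrier_mat n n" using P unfolding spd_real_def by auto
  have z: "Im z = 0" using part1[OF M K P ev] by simp
  have cz: "cmod z = \<bar>Re z\<bar>" using z by (simp add: cmod_def)
  obtain v where v: "v \<in> carrier_vec (2*n)" "v \<noteq> 0\<^sub>v (2*n)" "calM n \<nu> \<omega> M K *\<^sub>v v = z \<cdot>\<^sub>v (calP n ?P *\<^sub>v v)"
    using ev eig_iff[OF P Mc Kc] by auto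
  have vn: "v \<in> nzvecs (2*n)" using v unfolding nzvecs_def by auto
  have key: "cinner (calM n \<nu> \<omega> M K *\<^sub>v v) w = z * cinner (calP n ?P *\<^sub>v v) w" if "w \<in> carrier_vec (2*n)" for w
    unfolding v(3) using that calP_carrier[OF Pc] v(1) by (simp add: cinner_smult[of _ "2*n"])
  define R where "R = Re (cinner (calP n ?P *\<^sub>v v) v)"
  have R: "R > 0" unfolding R_def by (rule E2_pos[OF P v(1,2)])
  have pv: "pnorm (calP n ?P) v = sqrt R" unfolding pnorm_def R_def ..
  have e2: "cinner (calP n ?P *\<^sub>v v) v = of_real R" unfolding R_def using E2_real[OF P v(1)] by (simp add: complex_eq_iff)
  have "cmod (cinner (calM n \<nu> \<omega> M K *\<^sub>v v) v) \<le> sqrt R * sqrt R"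
    using bound1[OF M K _ om v(1) v(1), of \<nu>] nu unfolding pv by simp
  then have "cmod z * R \<le> R" unfolding key[OF v(1)] e2 using R by (simp add: norm_mult)
  then have up: "cmod z \<le> 1" using R by simp
  have "R \<le> cmod (cinner (calM n \<nu> \<omega> M K *\<^sub>v v) (W0 n v))"
    using complex_Re_le_cmod[of "cinner (calM n \<nu> \<omega> M K *\<^sub>v v) (W0 n v)"] E1_W0[OF M K v(1)]
    unfolding R_def by simp
  also have "\<dots> = cmod z * cmod (cinner (calP n ?P *\<^sub>v v) (W0 n v))"
    unfolding key[OF W0_carrier] by (simp add: norm_mult)
  also have "\<dots> \<le> cmod z * (pnorm (calP n ?P) v * pnorm (calP n ?P) (W0 n v))"
    by (rule mult_left_mono[OF E2_cs[OF P v(1) W0_carrier]]) simp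
  also have "pnorm (calP n ?P) v * pnorm (calP n ?P) (W0 n v) = sqrt 3 * R"
    unfolding pv pnorm_def E2_W0[OF P v(1)] R_def[symmetric] using R by (simp add: real_sqrt_mult algebra_simps)
  finally have "R \<le> cmod z * (sqrt 3 * R)" .
  then have "1 \<le> cmod z * sqrt 3" using R by (simp add: algebra_simps)
  then have lo: "1 / sqrt 3 \<le> cmod z" by (simp add: divide_le_eq)
  show ?thesis using z up lo cz by simp
qed

theorem theorem5:
  fixes n :: nat and M K :: "real mat" and \<nu> \<omega> :: real
  assumes "n > 0"
    and "spd_real n M" and "spd_real n K"
    and "\<nu> > 0" and "\<omega> \<ge> 0"
  shows
    "(\<forall>P. spd_real n P \<longrightarrow>
        (\<forall>z. eigenvalue (minv (calP n P) * calM n \<nu> \<omega> M K) z \<longrightarrow>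
              Im z = 0 \<and> eigenvalue (minv (calP n P) * calM n \<nu> \<omega> M K) (- z)))
     \<and> (let P = M + sqrt \<nu> \<cdot>\<^sub>m (K + \<omega> \<cdot>\<^sub>m M) in
          infsup_const (2 * n) (calM n \<nu> \<omega> M K) (calP n P) \<ge> 1 / sqrt 3
        \<and> bnorm (2 * n) (calM n \<nu> \<omega> M K) (calP n P) \<le> 1
        \<and> (\<forall>z. eigenvalue (minv (calP n P) * calM n \<nu> \<omega> M K) z \<longrightarrow>
              Im z = 0 \<and> 1 / sqrt 3 \<le> \<bar>Re z\<bar> \<and> \<bar>Re z\<bar> \<le> 1))"
proof -
  note M = assms(2) and K = assms(3) and nu = assms(4) and om = assms(5)
  let ?P = "M + sqrt \<nu> \<cdot>\<^sub>m (K + \<omega> \<cdot>\<^sub>m M)"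
  let ?r = "ratio (calM n \<nu> \<omega> M K) (calP n ?P)"
  have ne: "nzvecs (2*n) \<noteq> {}"
  proof -
    have "vec (2*n) (\<lambda>i. if i = 0 then 1 else 0) \<in> nzvecs (2*n)"
      using assms(1) unfolding nzvecs_def by (auto dest!: arg_cong[where f="\<lambda>v. v $ 0"])
    then show ?thesis by blast
  qed
  have le1: "?r x w \<le> 1" if "x \<in> nzvecs (2*n)" "w \<in> nzvecs (2*n)" for x w
    by (rule ratio_le1[OF M K nu om that])
  have bdd: "bdd_above (?r x ` nzvecs (2*n))" if "x \<in> nzvecs (2*n)" for x
    using le1[OF that] by (intro bdd_aboveI2) auto
  have inf: "infsup_const (2 * n) (calM n \<nu> \<omega> M K) (calP n ?P) \<ge> 1 / sqrt 3"
    unfolding infsup_const_def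
  proof (rule cINF_greatest[OF ne])
    fix x assume x: "x \<in> nzvecs (2*n)"
    have w: "W0 n x \<in> nzvecs (2*n)" "?r x (W0 n x) \<ge> 1 / sqrt 3" using ratio_W0[OF M K nu om x] by auto
    show "1 / sqrt 3 \<le> (SUP w\<in>nzvecs (2*n). ?r x w)"
      using w(2) cSUP_upper[OF w(1) bdd[OF x]] by linarith
  qed
  have bn: "bnorm (2 * n) (calM n \<nu> \<omega> M K) (calP n ?P) \<le> 1"
    unfolding bnorm_def
    by (rule cSUP_least[OF ne], rule cSUP_least[OF ne], rule le1)
  show ?thesis using part1[OF M K] inf bn eig_bound[OF M K nu om] by (simp add: Let_def)
qed

end
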